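(* Let $G$ be a connected signed digraph with $n$ vertices that is not a signed cycle. Then there exists a degree-bounded finite dynamical system $f$ on $G$ such that $f^{n+1}$ is a constant map.
   Context: A finite dynamical system (FDS) with $n$ components is a map $f=(f_1,\dots,f_n):X\to X$ where $X=X_1\times\cdots\times X_n$ and each $X_i$ is a nonempty finite interval of integers; $f^k$ denotes the $k$-fold composition of $f$ with itself. A signed digraph is a pair $G=(V,E)$ with $E\subseteq V\times V\times\{+,-\}$; $(j,i,s)\in E$ is an arc from $j$ to $i$ of sign $s$ (loops are allowed, and $G$ may have both a positive and a negative arc from $j$ to $i$, called parallel arcs). Write $G^+_i=\{j:(j,i,+)\in E\}$, $G^-_i=\{j:(j,i,-)\in E\}$, $G_i=G^+_i\cup G^-_i$. The in-degree of $i$ is $d^{\mathrm{in}}_G(i)=|G^+_i|+|G^-_i|$ and the out-degree $d^{\mathrm{out}}_G(i)$ is the number of positive arcs leaving $i$ plus the number of negative arcs leaving $i$. $G$ is connected if its underlying undirected graph is connected. The underlying unsigned digraph $|G|$ has vertex set $V$ and an arc from $j$ to $i$ iff $j\in G_i$. $G$ is a signed cycle if $|G|$ is a directed cycle (through all vertices, each exactly once; a single vertex with a loop counts) and $G$ has no parallel arcs. The interaction graph of an FDS $f$ with $n$ components is the signed digraph on vertex set $\{1,\dots,n\}$ having a positive (resp. negative) arc from $j$ to $i$ iff there is $x\in X$ with $x_j<\max(X_j)$ such that $f_i(x+e_j)-f_i(x)$ is positive (resp. negative), where $e_j$ is the $j$-th unit vector. $f$ is an FDS on $G$ if $G$ is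 its interaction graph. $f$ is degree-bounded if, with $G$ its interaction graph, for every $i$: $|X_i|=2$ if $d^{\mathrm{out}}_G(i)=0<d^{\mathrm{in}}_G(i)$, and $|X_i|\le d^{\mathrm{out}}_G(i)+1$ otherwise. *)

theory Defs
  imports Main
begin

text \<open>A signed digraph on the vertex set {0..<n} is given by its arc set
  E :: (nat \<times> nat \<times> bool) set; (j, i, True) is a positive arc from j to i,
  (j, i, False) a negative arc from j to i.\<close>

definition signed_digraph :: "nat \<Rightarrow> (nat \<times> nat \<times> bool) set \<Rightarrow> bool" where
  "signed_digraph n E \<longleftrightarrow> (\<forall>(j, i, s) \<in> E. j < n \<and> i < n)"

definition in_pos :: "(nat \<times> nat \<times> bool) set \<Rightarrow> nat \<Rightarrow> nat set" where
  "in_pos E i = {j. (j, i, True) \<in> E}"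

definition in_neg :: "(nat \<times> nat \<times> bool) set \<Rightarrow> nat \<Rightarrow> nat set" where
  "in_neg E i = {j. (j, i, False) \<in> E}"

definition in_degree :: "(nat \<times> nat \<times> bool) set \<Rightarrow> nat \<Rightarrow> nat" where
  "in_degree E i = card (in_pos E i) + card (in_neg E i)"

definition out_degree :: "(nat \<times> nat \<times> bool) set \<Rightarrow> nat \<Rightarrow> nat" where
  "out_degree E i = card {k. (i, k, True) \<in> E} + card {k. (i, k, False) \<in> E}"

definition unsigned_arcs :: "(nat \<times> nat \<times> bool) set \<Rightarrow> (nat \<times> nat) set" where
  "unsigned_arcs E = {(j, i). \<exists>s. (j, i, s) \<in> E}"

definition connected_sd :: "nat \<Rightarrow> (nat \<times> nat \<times> bool) set \<Rightarrow> bool" where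
  "connected_sd n E \<longleftrightarrow>
     (\<forall>u < n. \<forall>v < n. (u, v) \<in> (unsigned_arcs E \<union> (unsigned_arcs E)\<inverse>)\<^sup>*)"

definition signed_cycle :: "nat \<Rightarrow> (nat \<times> nat \<times> bool) set \<Rightarrow> bool" where
  "signed_cycle n E \<longleftrightarrow>
     (\<exists>vs. vs \<noteq> [] \<and> distinct vs \<and> set vs = {0..<n} \<and>
        unsigned_arcs E = {(vs ! k, vs ! ((k + 1) mod length vs)) | k. k < length vs}) \<and>
     \<not> (\<exists>j i. (j, i, True) \<in> E \<and> (j, i, False) \<in> E)"

definition state_space :: "nat \<Rightarrow> (nat \<Rightarrow> int) \<Rightarrow> (nat \<Rightarrow> int) \<Rightarrow> (nat \<Rightarrow> int) set" where
  "state_space n lo hi = {x. (\<forall>i < n. lo i \<le> x i \<and> x i \<le> hi i) \<and> (\<forall>i \<ge> n. x i = 0)}"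

definition is_FDS :: "nat \<Rightarrow> (nat \<Rightarrow> int) \<Rightarrow> (nat \<Rightarrow> int) \<Rightarrow> ((nat \<Rightarrow> int) \<Rightarrow> (nat \<Rightarrow> int)) \<Rightarrow> bool" where
  "is_FDS n lo hi f \<longleftrightarrow> (\<forall>i < n. lo i \<le> hi i) \<and>
     (\<forall>x \<in> state_space n lo hi. f x \<in> state_space n lo hi)"

definition interaction_graph ::
  "nat \<Rightarrow> (nat \<Rightarrow> int) \<Rightarrow> (nat \<Rightarrow> int) \<Rightarrow> ((nat \<Rightarrow> int) \<Rightarrow> (nat \<Rightarrow> int)) \<Rightarrow> (nat \<times> nat \<times> bool) set" where
  "interaction_graph n lo hi f =
     {(j, i, s). j < n \<and> i < n \<and>
        (\<exists>x \<in> state_space n lo hi. x j < hi j \<and>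
           (if s then f (x(j := x j + 1)) i - f x i > 0
                 else f (x(j := x j + 1)) i - f x i < 0))}"

definition degree_bounded ::
  "nat \<Rightarrow> (nat \<Rightarrow> int) \<Rightarrow> (nat \<Rightarrow> int) \<Rightarrow> ((nat \<Rightarrow> int) \<Rightarrow> (nat \<Rightarrow> int)) \<Rightarrow> bool" where
  "degree_bounded n lo hi f \<longleftrightarrow>
     (let E = interaction_graph n lo hi f in
       \<forall>i < n. (if out_degree E i = 0 \<and> 0 < in_degree E i
                 then card {lo i..hi i} = 2
                 else card {lo i..hi i} \<le> out_degree E i + 1))"

end

theory Submission
  imports Defs
begin

locale gr =
  fixes n :: nat and E :: "(nat \<times> nat \<times> bool) set"
  assumes sd: "signed_digraph n E"
begin

lemma arcD: "(j, i, s) \<in> E \<Longrightarrow> j < n \<and> i < n"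
  using sd unfolding signed_digraph_def by auto

lemma finE: "finite E"
proof -
  have "E \<subseteq> {..<n} \<times> {..<n} \<times> UNIV" using arcD by auto
  then show ?thesis by (rule finite_subset) auto
qed

lemma in_card: "in_degree E w = card {e\<in>E. fst (snd e) = w}"
proof -
  have eq: "{e\<in>E. fst (snd e) = w} = (\<lambda>j. (j, w, True)) ` in_pos E w \<union> (\<lambda>j. (j, w, False)) ` in_neg E w"
  proof (intro set_eqI iffI)
    fix e assume "e \<in> {e\<in>E. fst (snd e) = w}"
    moreover obtain j w' s where "e = (j, w', s)" by (cases e) auto
    ultimately show "e \<in> (\<lambda>j. (j, w, True)) ` in_pos E w \<union> (\<lambda>j. (j, w, False)) ` in_neg E w"
      unfolding in_pos_def in_neg_def by (cases s) auto
  qed (auto simp: in_pos_def in_neg_def)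
  have f1: "finite ((\<lambda>j. (j, w, True)) ` in_pos E w)" "finite ((\<lambda>j. (j, w, False)) ` in_neg E w)"
    unfolding in_pos_def in_neg_def by (rule finite_subset[OF _ finE], auto)+
  have "card {e\<in>E. fst (snd e) = w} = card ((\<lambda>j. (j, w, True)) ` in_pos E w) + card ((\<lambda>j. (j, w, False)) ` in_neg E w)"
    unfolding eq by (rule card_Un_disjoint[OF f1]) auto
  also have "\<dots> = card (in_pos E w) + card (in_neg E w)"
    by (subst card_image, simp add: inj_on_def)+ simp
  finally show ?thesis unfolding in_degree_def by simp
qed

lemma out_card: "out_degree E w = card {e\<in>E. fst e = w}"
proof -
  have eq: "{e\<in>E. fst e = w} = (\<lambda>j. (w, j, True)) ` {k. (w, k, True) \<in> E} \<union> (\<lambda>j. (w, j, False)) ` {k. (w, k, False) \<in> E}"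
  proof (intro set_eqI iffI)
    fix e assume "e \<in> {e\<in>E. fst e = w}"
    moreover obtain j w' s where "e = (j, w', s)" by (cases e) auto
    ultimately show "e \<in> (\<lambda>j. (w, j, True)) ` {k. (w, k, True) \<in> E} \<union> (\<lambda>j. (w, j, False)) ` {k. (w, k, False) \<in> E}"
      by (cases s) auto
  qed auto
  have f1: "finite ((\<lambda>j. (w, j, True)) ` {k. (w, k, True) \<in> E})" "finite ((\<lambda>j. (w, j, False)) ` {k. (w, k, False) \<in> E})"
    by (rule finite_subset[OF _ finE], auto)+
  have "card {e\<in>E. fst e = w} = card ((\<lambda>j. (w, j, True)) ` {k. (w, k, True) \<in> E}) + card ((\<lambda>j. (w, j, False)) ` {k. (w, k, False) \<in> E})"
    unfolding eq by (rule card_Un_disjoint[OF f1]) auto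
  also have "\<dots> = card {k. (w, k, True) \<in> E} + card {k. (w, k, False) \<in> E}"
    by (subst card_image, simp add: inj_on_def)+ simp
  finally show ?thesis unfolding out_degree_def by simp
qed

lemma sum_card: "finite W \<Longrightarrow> (\<Sum>w\<in>W. card {e\<in>E. g e = w}) = card {e\<in>E. g e \<in> W}"
proof -
  assume W: "finite W"
  have "{e\<in>E. g e \<in> W} = (\<Union>w\<in>W. {e\<in>E. g e = w})" by auto
  moreover have "card (\<Union>w\<in>W. {e\<in>E. g e = w}) = (\<Sum>w\<in>W. card {e\<in>E. g e = w})"
    by (rule card_UN_disjoint[OF W]) (use finE in auto)
  ultimately show ?thesis by simp
qed

lemma card_one_eq: "card A = 1 \<Longrightarrow> a \<in> A \<Longrightarrow> b \<in> A \<Longrightarrow> a = b"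
proof -
  assume "card A = 1" "a \<in> A" "b \<in> A"
  from \<open>card A = 1\<close> obtain x where "A = {x}" by (rule card_1_singletonE)
  with \<open>a \<in> A\<close> \<open>b \<in> A\<close> show "a = b" by simp
qed

lemma sum_in: "(\<Sum>v<n. in_degree E v) = card E"
proof -
  have "(\<Sum>v<n. in_degree E v) = card {e\<in>E. fst (snd e) \<in> {..<n}}"
    unfolding in_card by (rule sum_card) simp
  also have "{e\<in>E. fst (snd e) \<in> {..<n}} = E" using arcD by force
  finally show ?thesis .
qed

lemma sum_out: "(\<Sum>v<n. out_degree E v) = card E"
proof -
  have "(\<Sum>v<n. out_degree E v) = card {e\<in>E. fst e \<in> {..<n}}"
    unfolding out_card by (rule sum_card) simp
  also have "{e\<in>E. fst e \<in> {..<n}} = E" using arcD by force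
  finally show ?thesis .
qed

definition succ where "succ v = (SOME t. \<exists>s. (v, t, s) \<in> E)"

lemma cycle:
  assumes n1: "n \<ge> 1" and deg: "\<forall>v<n. in_degree E v \<ge> 1 \<and> out_degree E v \<le> 1"
    and conn: "connected_sd n E"
  shows "signed_cycle n E"
proof -
  have s1: "n \<le> card E"
  proof -
    have "(\<Sum>v<n. (1::nat)) \<le> (\<Sum>v<n. in_degree E v)" by (rule sum_mono) (use deg in auto)
    then show ?thesis using sum_in by simp
  qed
  have s2: "card E \<le> n"
  proof -
    have "(\<Sum>v<n. out_degree E v) \<le> (\<Sum>v<n. (1::nat))" by (rule sum_mono) (use deg in auto)
    then show ?thesis using sum_out by simp
  qed
  have in1: "in_degree E v = 1" if v: "v < n" for v
  proof (rule ccontr)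
    assume "in_degree E v \<noteq> 1"
    then have "in_degree E v > 1" using deg v by force
    then have "(\<Sum>v<n. (1::nat)) < (\<Sum>v<n. in_degree E v)"
      by (intro sum_strict_mono_ex1) (use deg v in auto)
    then show False using sum_in s2 by simp
  qed
  have od1: "out_degree E v = 1" if v: "v < n" for v
  proof (rule ccontr)
    assume "out_degree E v \<noteq> 1"
    then have "out_degree E v < 1" using deg v by force
    then have "(\<Sum>v<n. out_degree E v) < (\<Sum>v<n. (1::nat))"
      by (intro sum_strict_mono_ex1) (use deg v in auto)
    then show False using sum_out s1 by simp
  qed
  have out_unique: "t = t' \<and> s = s'" if "(v, t, s) \<in> E" "(v, t', s') \<in> E" for v t s t' s'
  proof -
    have "v < n" using arcD that by blast
    then have "card {e\<in>E. fst e = v} = 1" using od1 out_card by simp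
    then have "(v, t, s) = (v, t', s')" by (rule card_one_eq) (use that in auto)
    then show ?thesis by simp
  qed
  have in_unique: "u = u' \<and> s = s'" if "(u, w, s) \<in> E" "(u', w, s') \<in> E" for u u' w s s'
  proof -
    have "w < n" using arcD that by blast
    then have "card {e\<in>E. fst (snd e) = w} = 1" using in1 in_card by simp
    then have "(u, w, s) = (u', w, s')" by (rule card_one_eq) (use that in auto)
    then show ?thesis by simp
  qed
  have succ_arc: "\<exists>s. (v, succ v, s) \<in> E" if v: "v < n" for v
  proof -
    have "card {e\<in>E. fst e = v} = 1" using od1 out_card v by simp
    then have "{e\<in>E. fst e = v} \<noteq> {}" by (intro notI) simp
    then obtain e where "e \<in> E" "fst e = v" by blast
    then obtain t s where "(v, t, s) \<in> E" by (cases e) auto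
    then have "\<exists>t s. (v, t, s) \<in> E" by blast
    then show ?thesis unfolding succ_def by (rule someI_ex)
  qed
  have arc_succ: "t = succ v" if a: "(v, t, s) \<in> E" for v t s
  proof -
    have "v < n" using arcD a by blast
    then obtain s' where "(v, succ v, s') \<in> E" using succ_arc by blast
    then show ?thesis using out_unique a by blast
  qed
  have succ_lt: "succ v < n" if "v < n" for v
    using succ_arc[OF that] arcD by blast
  have succ_inj: "u = v" if uv: "u < n" "v < n" "succ u = succ v" for u v
  proof -
    obtain s where "(u, succ u, s) \<in> E" using succ_arc uv by blast
    moreover obtain s' where "(v, succ v, s') \<in> E" using succ_arc uv by blast
    ultimately show ?thesis using in_unique uv(3) by metis
  qed
  have nopar: "\<not> (\<exists>j i. (j, i, True) \<in> E \<and> (j, i, False) \<in> E)"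
    using in_unique by blast
  have ua_eq: "unsigned_arcs E = {(v, succ v) | v. v < n}"
  proof (intro set_eqI iffI)
    fix e assume "e \<in> unsigned_arcs E"
    then obtain j i s where e: "e = (j, i)" "(j, i, s) \<in> E" unfolding unsigned_arcs_def by auto
    then show "e \<in> {(v, succ v) | v. v < n}" using arc_succ arcD by blast
  next
    fix e assume "e \<in> {(v, succ v) | v. v < n}"
    then obtain v where "e = (v, succ v)" "v < n" by auto
    then show "e \<in> unsigned_arcs E" using succ_arc unfolding unsigned_arcs_def by auto
  qed
  have it_lt: "(succ ^^ k) v < n" if "v < n" for k v
    by (induction k) (use that succ_lt in auto)
  have it_cancel: "x = y" if "x < n" "y < n" "(succ ^^ a) x = (succ ^^ a) y" for a x y
    using that
  proof (induction a)
    case 0 then show ?case by simp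
  next
    case (Suc a)
    then have "(succ ^^ a) x = (succ ^^ a) y" using succ_inj it_lt by simp
    then show ?case using Suc by blast
  qed
  have shift: "(succ ^^ (b - a)) 0 = 0" if "a \<le> b" "(succ ^^ b) 0 = (succ ^^ a) 0" for a b
  proof -
    have "(succ ^^ b) 0 = (succ ^^ a) ((succ ^^ (b - a)) 0)"
      using that(1) by (metis funpow_add le_add_diff_inverse o_apply)
    then have "(succ ^^ a) ((succ ^^ (b - a)) 0) = (succ ^^ a) 0" using that(2) by simp
    then show ?thesis using it_cancel[of "(succ ^^ (b - a)) 0" 0 a] it_lt n1 by simp
  qed
  have per: "\<exists>m. 0 < m \<and> (succ ^^ m) 0 = 0"
  proof -
    have "\<not> inj_on (\<lambda>k. (succ ^^ k) 0) {..n}"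
    proof
      assume "inj_on (\<lambda>k. (succ ^^ k) 0) {..n}"
      moreover have "(\<lambda>k. (succ ^^ k) 0) ` {..n} \<subseteq> {..<n}" using it_lt n1 by auto
      ultimately have "card {..n} \<le> card {..<n}" by (rule card_inj_on_le) simp
      then show False by simp
    qed
    then obtain a b where ab: "a \<le> n" "b \<le> n" "a \<noteq> b" "(succ ^^ a) 0 = (succ ^^ b) 0"
      unfolding inj_on_def by auto
    show ?thesis
    proof (cases "a < b")
      case True
      then show ?thesis using shift[of a b] ab by (intro exI[of _ "b - a"]) auto
    next
      case False
      then show ?thesis using shift[of b a] ab by (intro exI[of _ "a - b"]) auto
    qed
  qed
  define m0 where "m0 = (LEAST m. 0 < m \<and> (succ ^^ m) 0 = 0)"
  have m0: "0 < m0" "(succ ^^ m0) 0 = 0" using LeastI_ex[OF per] unfolding m0_def by auto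
  have m0_min: "(succ ^^ m) 0 \<noteq> 0" if "0 < m" "m < m0" for m
    using not_less_Least[of m "\<lambda>m. 0 < m \<and> (succ ^^ m) 0 = 0"] that unfolding m0_def by auto
  have it_mult: "(succ ^^ (q * m0)) 0 = 0" for q
  proof (induction q)
    case 0 then show ?case by simp
  next
    case (Suc q)
    have "(succ ^^ (Suc q * m0)) 0 = (succ ^^ m0) ((succ ^^ (q * m0)) 0)"
      by (simp add: funpow_add)
    then show ?case using Suc m0 by simp
  qed
  have it_mod: "(succ ^^ k) 0 = (succ ^^ (k mod m0)) 0" for k
  proof -
    have "k = k mod m0 + (k div m0) * m0" by simp
    then have "(succ ^^ k) 0 = (succ ^^ (k mod m0)) ((succ ^^ ((k div m0) * m0)) 0)"
      by (metis funpow_add o_apply)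
    then show ?thesis using it_mult by simp
  qed
  have orbit: "\<exists>k. v = (succ ^^ k) 0" if "(0, v) \<in> (unsigned_arcs E \<union> (unsigned_arcs E)\<inverse>)\<^sup>*" for v
    using that
  proof (induction rule: rtrancl_induct)
    case base then show ?case by (intro exI[of _ 0]) simp
  next
    case (step a b)
    then obtain k where k: "a = (succ ^^ k) 0" by blast
    from step.hyps(2) show ?case
    proof
      assume "(a, b) \<in> unsigned_arcs E"
      then have "b = succ a" using ua_eq by auto
      then show ?case using k by (intro exI[of _ "Suc k"]) simp
    next
      assume "(a, b) \<in> (unsigned_arcs E)\<inverse>"
      then have ab: "a = succ b" "b < n" using ua_eq by auto
      have "a = (succ ^^ (k + m0)) 0" using k it_mod by (metis mod_add_self2)
      also have "\<dots> = succ ((succ ^^ (k + m0 - 1)) 0)"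
        using m0(1) by (metis Suc_diff_1 add_gr_0 funpow.simps(2) o_apply)
      finally have "b = (succ ^^ (k + m0 - 1)) 0" using ab succ_inj it_lt n1 by simp
      then show ?case by blast
    qed
  qed
  have orb: "\<exists>k<m0. v = (succ ^^ k) 0" if "v < n" for v
  proof -
    have "(0, v) \<in> (unsigned_arcs E \<union> (unsigned_arcs E)\<inverse>)\<^sup>*" using conn n1 that
      unfolding connected_sd_def by simp
    then obtain k where "v = (succ ^^ k) 0" using orbit by blast
    then show ?thesis using it_mod m0(1) by (intro exI[of _ "k mod m0"]) simp
  qed
  define vs where "vs = map (\<lambda>k. (succ ^^ k) 0) [0..<m0]"
  have inj: "inj_on (\<lambda>k. (succ ^^ k) 0) {0..<m0}"
  proof (rule inj_onI)
    fix a b assume ab: "a \<in> {0..<m0}" "b \<in> {0..<m0}" "(succ ^^ a) 0 = (succ ^^ b) 0"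
    show "a = b"
    proof (rule ccontr)
      assume "a \<noteq> b"
      then show False
      proof (cases "a < b")
        case True
        have "b - a < m0" using ab(2) by auto
        then show False using shift[of a b] ab m0_min[of "b - a"] True by auto
      next
        case False
        have "a - b < m0" using ab(1) by auto
        then show False using shift[of b a] ab m0_min[of "a - b"] \<open>a \<noteq> b\<close> False by auto
      qed
    qed
  qed
  have dist: "distinct vs" unfolding vs_def by (simp add: distinct_map inj)
  have setvs: "set vs = {0..<n}"
    unfolding vs_def using it_lt n1 orb by (auto simp: image_iff) (metis atLeastLessThan_iff zero_le)
  have len: "length vs = m0" unfolding vs_def by simp
  have nth: "vs ! k = (succ ^^ k) 0" if "k < m0" for k unfolding vs_def using that by simp
  have m0n: "m0 = n" using distinct_card[OF dist] setvs len by simp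
  have "unsigned_arcs E = {(vs ! k, vs ! ((k + 1) mod length vs)) | k. k < length vs}"
  proof -
    have e: "vs ! ((k + 1) mod m0) = succ (vs ! k)" if "k < m0" for k
    proof -
      have "vs ! ((k + 1) mod m0) = (succ ^^ ((k + 1) mod m0)) 0" using nth m0(1) by simp
      also have "\<dots> = (succ ^^ (k + 1)) 0" using it_mod by simp
      finally show ?thesis using nth that by simp
    qed
    have "{(vs ! k, vs ! ((k + 1) mod length vs)) | k. k < length vs} = {(vs ! k, succ (vs ! k)) | k. k < m0}"
      using e len by force
    also have "\<dots> = {(v, succ v) | v. v < n}"
    proof (intro set_eqI iffI)
      fix e assume "e \<in> {(vs ! k, succ (vs ! k)) | k. k < m0}"
      then show "e \<in> {(v, succ v) | v. v < n}" using nth it_lt n1 by auto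
    next
      fix e assume "e \<in> {(v, succ v) | v. v < n}"
      then obtain v where v: "e = (v, succ v)" "v < n" by auto
      then obtain k where k: "k < m0" "v = (succ ^^ k) 0" using orb by blast
      then have vsk: "vs ! k = v" using nth by simp
      show "e \<in> {(vs ! k, succ (vs ! k)) | k. k < m0}"
        unfolding mem_Collect_eq by (rule exI[of _ k]) (use v(1) k(1) vsk in blast)
    qed
    finally show ?thesis using ua_eq by simp
  qed
  moreover have "vs \<noteq> []" using len m0 by auto
  ultimately show ?thesis unfolding signed_cycle_def using dist setvs nopar by blast
qed

lemma closed_all:
  assumes S: "S \<subseteq> {..<n}" and KS: "\<And>v. v < n \<Longrightarrow> in_degree E v = 0 \<or> out_degree E v \<ge> 2 \<Longrightarrow> v \<in> S"
    and cl: "\<And>u v. u \<in> S \<Longrightarrow> (u, v) \<in> unsigned_arcs E \<Longrightarrow> v \<in> S"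
    and conn: "connected_sd n E" and nc: "\<not> signed_cycle n E"
  shows "S = {..<n}"
proof (rule ccontr)
  assume ne: "S \<noteq> {..<n}"
  define W where "W = {..<n} - S"
  have Wne: "W \<noteq> {}" using ne S unfolding W_def by auto
  have finW: "finite W" unfolding W_def by simp
  have wdeg: "in_degree E w \<ge> 1 \<and> out_degree E w \<le> 1" if "w \<in> W" for w
    using KS[of w] that unfolding W_def by force
  define Ain where "Ain = {e\<in>E. fst (snd e) \<in> W}"
  define Aout where "Aout = {e\<in>E. fst e \<in> W}"
  have sub: "Ain \<subseteq> Aout"
  proof
    fix e assume "e \<in> Ain"
    then obtain j w s where e: "e = (j, w, s)" "(j, w, s) \<in> E" "w \<in> W" unfolding Ain_def by (cases e) auto
    have "j < n" using arcD e by blast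
    moreover have "j \<notin> S"
    proof
      assume "j \<in> S"
      then have "w \<in> S" using cl[of j w] e unfolding unsigned_arcs_def by blast
      then show False using e unfolding W_def by blast
    qed
    ultimately show "e \<in> Aout" using e unfolding Aout_def W_def by auto
  qed
  have c1: "card W \<le> card Ain"
  proof -
    have "(\<Sum>w\<in>W. (1::nat)) \<le> (\<Sum>w\<in>W. in_degree E w)" by (rule sum_mono) (use wdeg in auto)
    also have "\<dots> = card Ain" unfolding in_card Ain_def by (rule sum_card[OF finW])
    finally show ?thesis by simp
  qed
  have c2: "card Aout \<le> card W"
  proof -
    have "card Aout = (\<Sum>w\<in>W. out_degree E w)" unfolding out_card Aout_def by (rule sum_card[OF finW, symmetric])
    also have "\<dots> \<le> (\<Sum>w\<in>W. (1::nat))" by (rule sum_mono) (use wdeg in auto)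
    finally show ?thesis by simp
  qed
  have finA: "finite Aout" unfolding Aout_def using finE by simp
  have eqA: "Ain = Aout" using card_subset_eq[OF finA sub] card_mono[OF finA sub] c1 c2 by simp
  have out_in: "i \<in> W" if "(j, i, s) \<in> E" "j \<in> W" for j i s
  proof -
    have "(j, i, s) \<in> Aout" using that unfolding Aout_def by simp
    then show ?thesis using eqA unfolding Ain_def by auto
  qed
  show False
  proof (cases "S = {}")
    case True
    then have "W = {..<n}" unfolding W_def by simp
    then have "n \<ge> 1" using Wne by (cases n) auto
    moreover have "\<forall>v<n. in_degree E v \<ge> 1 \<and> out_degree E v \<le> 1" using wdeg \<open>W = {..<n}\<close> by blast
    ultimately have "signed_cycle n E" using cycle conn by blast
    then show False using nc by blast
  next
    case False
    then obtain u where u: "u \<in> S" by blast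
    obtain w where w: "w \<in> W" using Wne by blast
    have "u < n" "w < n" using u S w unfolding W_def by auto
    then have "(u, w) \<in> (unsigned_arcs E \<union> (unsigned_arcs E)\<inverse>)\<^sup>*" using conn unfolding connected_sd_def by blast
    then have "w \<in> S"
    proof (induction rule: rtrancl_induct)
      case base then show ?case using u .
    next
      case (step a b)
      from step.hyps(2) show ?case
      proof
        assume "(a, b) \<in> unsigned_arcs E"
        then show ?case using cl step.IH by blast
      next
        assume "(a, b) \<in> (unsigned_arcs E)\<inverse>"
        then obtain s where bs: "(b, a, s) \<in> E" unfolding unsigned_arcs_def by auto
        then have "b < n" using arcD by blast
        moreover have "b \<notin> W"
        proof
          assume "b \<in> W"
          then have "a \<in> W" using out_in bs by blast
          then show False using step.IH unfolding W_def by blast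
        qed
        ultimately show ?case unfolding W_def by blast
      qed
    qed
    then show False using w unfolding W_def by blast
  qed
qed

primrec L :: "nat \<Rightarrow> nat set" where
  "L 0 = {v. v < n \<and> (in_degree E v = 0 \<or> out_degree E v \<ge> 2)}"
| "L (Suc t) = L t \<union> {v. v < n \<and> (\<exists>u\<in>L t. (u, v) \<in> unsigned_arcs E)}"

lemma L_sub: "L t \<subseteq> {..<n}" by (induction t) auto

lemma L0_sub: "L 0 \<subseteq> L t" by (induction t) auto

lemma in_nz: "in_degree E v \<noteq> 0 \<Longrightarrow> \<exists>j s. (j, v, s) \<in> E"
proof -
  assume "in_degree E v \<noteq> 0"
  then have "{e\<in>E. fst (snd e) = v} \<noteq> {}" unfolding in_card by (intro notI) simp
  then obtain e where "e \<in> E" "fst (snd e) = v" by blast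
  then show ?thesis by (cases e) auto
qed

context
  assumes conn: "connected_sd n E" and nc: "\<not> signed_cycle n E"
begin

lemma L_grow: "L t \<noteq> {..<n} \<Longrightarrow> L t \<subset> L (Suc t)"
proof -
  assume ne: "L t \<noteq> {..<n}"
  have "L t \<subseteq> L (Suc t)" by auto
  moreover have "L (Suc t) \<noteq> L t"
  proof
    assume eq: "L (Suc t) = L t"
    have "L t = {..<n}"
    proof (rule closed_all[OF L_sub _ _ conn nc])
      fix v assume "v < n" "in_degree E v = 0 \<or> out_degree E v \<ge> 2"
      then show "v \<in> L t" using L0_sub[of t] by auto
    next
      fix u v assume "u \<in> L t" "(u, v) \<in> unsigned_arcs E"
      moreover then have "v < n" using arcD unfolding unsigned_arcs_def by auto
      ultimately have "v \<in> L (Suc t)" by auto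
      then show "v \<in> L t" using eq by (simp only:)
    qed
    then show False using ne by blast
  qed
  ultimately show ?thesis by blast
qed

lemma L_card: "L t = {..<n} \<or> t < card (L t)"
proof (induction t)
  case 0
  show ?case
  proof (cases "L 0 = {}")
    case True
    have "({}::nat set) = {..<n}"
      by (rule closed_all[OF _ _ _ conn nc]) (use True in auto)
    then show ?thesis using True by simp
  next
    case False
    have "finite (L 0)" using L_sub[of 0] finite_subset by blast
    then show ?thesis using False by (simp add: card_gt_0_iff)
  qed
next
  case (Suc t)
  show ?case
  proof (cases "L t = {..<n}")
    case True
    then have "L (Suc t) = {..<n}" using L_sub[of "Suc t"] by auto
    then show ?thesis by simp
  next
    case False
    then have "t < card (L t)" using Suc by blast
    moreover have "card (L t) < card (L (Suc t))"
      by (rule psubset_card_mono[OF _ L_grow[OF False]]) (use L_sub[of "Suc t"] finite_subset in blast)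
    ultimately show ?thesis by simp
  qed
qed

lemma L_full: "n \<ge> 1 \<Longrightarrow> L (n - 1) = {..<n}"
proof (rule ccontr)
  assume n1: "n \<ge> 1" and ne: "L (n - 1) \<noteq> {..<n}"
  then have "n - 1 < card (L (n - 1))" using L_card by blast
  moreover have "card (L (n - 1)) \<le> n" using card_mono[OF _ L_sub[of "n - 1"]] by simp
  ultimately have "card (L (n - 1)) = card {..<n}" by simp
  then have "L (n - 1) = {..<n}" using card_subset_eq[OF _ L_sub] by simp
  then show False using ne by blast
qed

definition dist where "dist v = (LEAST t. v \<in> L t)"

lemma dist_in: "v < n \<Longrightarrow> v \<in> L (dist v) \<and> dist v < n"
proof -
  assume v: "v < n"
  then have "v \<in> L (n - 1)" using L_full by simp
  then have "v \<in> L (dist v)" "dist v \<le> n - 1" unfolding dist_def by (auto intro: LeastI Least_le)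
  then show ?thesis using v by simp
qed

lemma dist_prop: "v < n \<Longrightarrow> in_degree E v \<noteq> 0 \<Longrightarrow> out_degree E v \<le> 1 \<Longrightarrow>
  \<exists>u. (u, v) \<in> unsigned_arcs E \<and> dist u < dist v"
proof -
  assume v: "v < n" "in_degree E v \<noteq> 0" "out_degree E v \<le> 1"
  have vin: "v \<in> L (dist v)" using dist_in v by blast
  have "v \<notin> L 0" using v by auto
  then obtain t where t: "dist v = Suc t" using vin by (cases "dist v") auto
  have "v \<notin> L t" using not_less_Least[of t "\<lambda>t. v \<in> L t"] t unfolding dist_def by simp
  then obtain u where u: "u \<in> L t" "(u, v) \<in> unsigned_arcs E" using vin t by auto
  have "dist u \<le> t" unfolding dist_def using u(1) by (rule Least_le)
  then show ?thesis using u t by (intro exI[of _ u]) simp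
qed

lemma exists_pd: "\<exists>p dist. (\<forall>v. v < n \<longrightarrow> in_degree E v \<noteq> 0 \<longrightarrow> (\<exists>s. (p v, v, s) \<in> E)) \<and>
  (\<forall>v. v < n \<longrightarrow> in_degree E v \<noteq> 0 \<longrightarrow> out_degree E v \<le> 1 \<longrightarrow> dist (p v) < dist v) \<and>
  (\<forall>v. v < n \<longrightarrow> dist v < n)"
proof -
  define p where "p v = (if in_degree E v = 0 \<or> out_degree E v \<ge> 2 then (SOME u. (u, v) \<in> unsigned_arcs E)
      else (SOME u. (u, v) \<in> unsigned_arcs E \<and> dist u < dist v))" for v
  have 1: "\<exists>s. (p v, v, s) \<in> E" if "v < n" "in_degree E v \<noteq> 0" for v
  proof (cases "out_degree E v \<ge> 2")
    case True
    have "\<exists>u. (u, v) \<in> unsigned_arcs E" using in_nz[OF that(2)] unfolding unsigned_arcs_def by auto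
    then have "((SOME u. (u, v) \<in> unsigned_arcs E), v) \<in> unsigned_arcs E" by (rule someI_ex)
    then have "(p v, v) \<in> unsigned_arcs E" unfolding p_def using True by simp
    then show ?thesis unfolding unsigned_arcs_def by auto
  next
    case False
    then have o1: "out_degree E v \<le> 1" by simp
    have "(p v, v) \<in> unsigned_arcs E \<and> dist (p v) < dist v"
      unfolding p_def using that False someI_ex[OF dist_prop[OF that(1,2) o1]] by simp
    then show ?thesis unfolding unsigned_arcs_def by auto
  qed
  have 2: "dist (p v) < dist v" if "v < n" "in_degree E v \<noteq> 0" "out_degree E v \<le> 1" for v
  proof -
    have "(p v, v) \<in> unsigned_arcs E \<and> dist (p v) < dist v"
      unfolding p_def using that someI_ex[OF dist_prop[OF that]] by simp
    then show ?thesis by simp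
  qed
  show ?thesis using 1 2 dist_in by blast
qed

end

end

locale cons =
  fixes n :: nat and E :: "(nat \<times> nat \<times> bool) set" and p :: "nat \<Rightarrow> nat" and dist :: "nat \<Rightarrow> nat"
  assumes sd: "signed_digraph n E"
  and p_arc: "\<And>v. v < n \<Longrightarrow> in_degree E v \<noteq> 0 \<Longrightarrow> \<exists>s. (p v, v, s) \<in> E"
  and p_dist: "\<And>v. v < n \<Longrightarrow> in_degree E v \<noteq> 0 \<Longrightarrow> out_degree E v \<le> 1 \<Longrightarrow> dist (p v) < dist v"
  and dist_lt: "\<And>v. v < n \<Longrightarrow> dist v < n"
begin

lemma arcD: "(j, i, s) \<in> E \<Longrightarrow> j < n \<and> i < n"
  using sd unfolding signed_digraph_def by auto

lemma fin_in_pos: "finite (in_pos E i)"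
  by (rule finite_subset[of _ "{..<n}"]) (auto simp: in_pos_def dest: arcD)
lemma fin_in_neg: "finite (in_neg E i)"
  by (rule finite_subset[of _ "{..<n}"]) (auto simp: in_neg_def dest: arcD)
lemma fin_out: "finite {k. (i, k, s) \<in> E}"
  by (rule finite_subset[of _ "{..<n}"]) (auto dest: arcD)

lemma src_iff: "in_degree E v = 0 \<longleftrightarrow> (\<forall>j s. (j, v, s) \<notin> E)"
proof -
  have "in_degree E v = 0 \<longleftrightarrow> in_pos E v = {} \<and> in_neg E v = {}"
    using fin_in_pos fin_in_neg by (simp add: in_degree_def)
  moreover have "in_pos E v = {} \<longleftrightarrow> (\<forall>j. (j, v, True) \<notin> E)" by (auto simp: in_pos_def)
  moreover have "in_neg E v = {} \<longleftrightarrow> (\<forall>j. (j, v, False) \<notin> E)" by (auto simp: in_neg_def)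
  moreover have "(\<forall>j s. (j, v, s) \<notin> E) \<longleftrightarrow> (\<forall>j. (j, v, True) \<notin> E) \<and> (\<forall>j. (j, v, False) \<notin> E)"
    by (metis (full_types))
  ultimately show ?thesis by blast
qed

lemma card_pos: "(v, k, s) \<in> E \<Longrightarrow> card {k. (v, k, s) \<in> E} \<ge> 1"
proof -
  assume a: "(v, k, s) \<in> E"
  have "{k. (v, k, s) \<in> E} \<noteq> {}" using a by blast
  then have "card {k. (v, k, s) \<in> E} \<noteq> 0" using fin_out[of v s] by simp
  then show ?thesis by simp
qed

lemma od_ge1: "(v, k, s) \<in> E \<Longrightarrow> out_degree E v \<ge> 1"
  using card_pos[of v k s] unfolding out_degree_def by (cases s) auto

definition negonly where "negonly q v \<longleftrightarrow> (q, v, False) \<in> E \<and> (q, v, True) \<notin> E"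
definition both where "both q v \<longleftrightarrow> (q, v, False) \<in> E \<and> (q, v, True) \<in> E"

lemma both_od: "both q v \<Longrightarrow> out_degree E q \<ge> 2"
  using card_pos[of q v True] card_pos[of q v False] unfolding both_def out_degree_def by simp

primrec D :: "nat \<Rightarrow> nat \<Rightarrow> bool" where
  "D 0 v = False"
| "D (Suc k) v = ((if out_degree E (p v) = 1 \<and> in_degree E (p v) \<noteq> 0 then D k (p v) else False) \<noteq> negonly (p v) v)"

definition beta where "beta v = D (Suc n) v"

lemma p_lt: "v < n \<Longrightarrow> in_degree E v \<noteq> 0 \<Longrightarrow> p v < n"
  using p_arc arcD by blast

lemma D_stable: "u < n \<Longrightarrow> in_degree E u \<noteq> 0 \<Longrightarrow> out_degree E u \<le> 1 \<Longrightarrow> dist u < k \<Longrightarrow> D (Suc k) u = D k u"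
proof (induction k arbitrary: u)
  case 0 then show ?case by simp
next
  case (Suc k)
  have pu: "p u < n" using p_lt Suc.prems by blast
  have dl: "dist (p u) < dist u" using p_dist Suc.prems by blast
  have e1: "D (Suc (Suc k)) u = ((if out_degree E (p u) = 1 \<and> in_degree E (p u) \<noteq> 0 then D (Suc k) (p u) else False) \<noteq> negonly (p u) u)"
    by (rule D.simps(2))
  have e2: "D (Suc k) u = ((if out_degree E (p u) = 1 \<and> in_degree E (p u) \<noteq> 0 then D k (p u) else False) \<noteq> negonly (p u) u)"
    by (rule D.simps(2))
  show ?case
  proof (cases "out_degree E (p u) = 1 \<and> in_degree E (p u) \<noteq> 0")
    case True
    then have "D (Suc k) (p u) = D k (p u)"
      using Suc.IH[of "p u"] pu dl Suc.prems by auto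
    then show ?thesis unfolding e1 e2 if_P[OF True] by (simp only:)
  next
    case False then show ?thesis unfolding e1 e2 if_not_P[OF False] by (simp only:)
  qed
qed

lemma beta_rec: "v < n \<Longrightarrow> in_degree E v \<noteq> 0 \<Longrightarrow>
  beta v = ((if out_degree E (p v) = 1 \<and> in_degree E (p v) \<noteq> 0 then beta (p v) else False) \<noteq> negonly (p v) v)"
proof -
  assume v: "v < n" "in_degree E v \<noteq> 0"
  have pv: "p v < n" using p_lt v by blast
  have e: "beta v = ((if out_degree E (p v) = 1 \<and> in_degree E (p v) \<noteq> 0 then D n (p v) else False) \<noteq> negonly (p v) v)"
    unfolding beta_def by (rule D.simps(2))
  show ?thesis
  proof (cases "out_degree E (p v) = 1 \<and> in_degree E (p v) \<noteq> 0")
    case True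
    have "D (Suc n) (p v) = D n (p v)" using D_stable[of "p v" n] True pv dist_lt by auto
    then show ?thesis unfolding e if_P[OF True] unfolding beta_def by (simp only:)
  next
    case False then show ?thesis unfolding e if_not_P[OF False] by (simp only:)
  qed
qed

definition hi :: "nat \<Rightarrow> int" where
  "hi v = (if out_degree E v \<ge> 2 then int (out_degree E v) else if out_degree E v = 1 then 1
           else if in_degree E v = 0 then 0 else 1)"
definition c :: "nat \<Rightarrow> int" where
  "c v = (if out_degree E v = 2 \<and> (\<exists>t. both v t) then 2 else 1)"
definition d :: "nat \<Rightarrow> int" where
  "d v = (if in_degree E v = 0 then 0 else if beta v then c v else 0)"
definition lit :: "nat \<Rightarrow> nat \<Rightarrow> int \<Rightarrow> bool" where
  "lit i j y = (if j = p i then (if both j i then y = 3 - c j else if out_degree E j \<ge> 2 then y \<ge> 2 else y = 1 - d j)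
     else (if both j i then y = 1 else if (j, i, \<not> beta i) \<in> E then y \<ge> 1 else y \<le> 0))"
definition Gin where "Gin i = {j. \<exists>s. (j, i, s) \<in> E}"
definition F where "F x i = (beta i \<noteq> (\<forall>j\<in>Gin i. lit i j (x j)))"
definition ff where "ff x = (\<lambda>i. if i < n \<and> in_degree E i \<noteq> 0 then (if F x i then c i else 0) else 0)"

lemma c_cases: "c v = 1 \<or> c v = 2" unfolding c_def by auto

lemma c_two: "c q = 2 \<Longrightarrow> (q, v, s) \<in> E \<Longrightarrow> both q v"
proof -
  assume c2: "c q = 2" and a: "(q, v, s) \<in> E"
  then have od: "out_degree E q = 2" and "\<exists>t. both q t" unfolding c_def by (auto split: if_splits)
  then obtain t where t: "both q t" by blast
  have c1: "card {k. (q, k, True) \<in> E} \<ge> 1" "card {k. (q, k, False) \<in> E} \<ge> 1"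
    using card_pos[of q t True] card_pos[of q t False] t unfolding both_def by auto
  then have "card {k. (q, k, True) \<in> E} = 1" "card {k. (q, k, False) \<in> E} = 1"
    using od unfolding out_degree_def by auto
  moreover have "A = {t}" if "card A = 1" "t \<in> A" for A :: "nat set"
  proof -
    from that(1) obtain x where "A = {x}" by (rule card_1_singletonE)
    with that(2) show ?thesis by simp
  qed
  ultimately have "{k. (q, k, True) \<in> E} = {t}" "{k. (q, k, False) \<in> E} = {t}"
    using t unfolding both_def by auto
  then have "v = t" using a by (cases s) auto
  then show ?thesis using t by simp
qed

lemma single_sign: "\<not> both j i \<Longrightarrow> (j, i, a) \<in> E \<Longrightarrow> (j, i, b) \<in> E \<Longrightarrow> a = b"
  unfolding both_def by (cases a; cases b) auto

lemma hi_ge1: "(j, i, s) \<in> E \<Longrightarrow> hi j \<ge> 1"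
  using od_ge1[of j i s] unfolding hi_def by auto

lemma hi_both: "both j i \<Longrightarrow> hi j = int (out_degree E j) \<and> hi j \<ge> 2"
  using both_od[of j i] unfolding hi_def by auto

lemma hi_c1: "both j i \<Longrightarrow> c j = 1 \<Longrightarrow> hi j \<ge> 3"
  using both_od[of j i] hi_both[of j i] unfolding c_def by (auto split: if_splits)

lemma hi_c2: "c j = 2 \<Longrightarrow> hi j = 2"
  unfolding c_def hi_def by (auto split: if_splits)

lemma lit_updown:
  assumes i: "i < n" "in_degree E i \<noteq> 0" and j: "j \<in> Gin i"
  shows "(\<exists>k. 0 \<le> k \<and> k < hi j \<and> \<not> lit i j k \<and> lit i j (k+1)) \<longleftrightarrow> (j, i, \<not> beta i) \<in> E"
    and "(\<exists>k. 0 \<le> k \<and> k < hi j \<and> lit i j k \<and> \<not> lit i j (k+1)) \<longleftrightarrow> (j, i, beta i) \<in> E"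
proof -
  obtain s0 where s0: "(j, i, s0) \<in> E" using j unfolding Gin_def by blast
  have h1: "hi j \<ge> 1" using hi_ge1[OF s0] .
  have "((\<exists>k. 0 \<le> k \<and> k < hi j \<and> \<not> lit i j k \<and> lit i j (k+1)) \<longleftrightarrow> (j, i, \<not> beta i) \<in> E) \<and>
        ((\<exists>k. 0 \<le> k \<and> k < hi j \<and> lit i j k \<and> \<not> lit i j (k+1)) \<longleftrightarrow> (j, i, beta i) \<in> E)"
  proof (cases "j = p i")
    case True
    note br = beta_rec[OF i]
    show ?thesis
    proof (cases "both j i")
      case b: True
      then have E2: "(j, i, True) \<in> E" "(j, i, False) \<in> E" unfolding both_def by auto
      have E3: "(j, i, \<not> beta i) \<in> E" "(j, i, beta i) \<in> E" using E2 by (cases "beta i"; simp)+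
      have L: "lit i j y \<longleftrightarrow> y = 3 - c j" for y using True b unfolding lit_def by simp
      show ?thesis
      proof (cases "c j = 1")
        case c1: True
        have "hi j \<ge> 3" using hi_c1[OF b c1] .
        then show ?thesis unfolding L using E3 c1
          by (intro conjI iffI; (rule exI[of _ 1] | rule exI[of _ 2] | simp); simp)
      next
        case c2: False
        then have "c j = 2" using c_cases by blast
        then have "hi j = 2" using hi_c2 by blast
        then show ?thesis unfolding L using E3 \<open>c j = 2\<close>
          by (intro conjI iffI; (rule exI[of _ 0] | rule exI[of _ 1] | simp); simp)
      qed
    next
      case nb: False
      show ?thesis
      proof (cases "out_degree E j \<ge> 2")
        case o2: True
        then have hi2: "hi j \<ge> 2" unfolding hi_def by simp
        have L: "lit i j y \<longleftrightarrow> y \<ge> 2" for y using True nb o2 unfolding lit_def by simp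
        have bi: "beta i = negonly j i" using br True o2 by simp
        have "(j, i, \<not> beta i) \<in> E \<and> (j, i, beta i) \<notin> E"
          using bi nb s0 unfolding negonly_def both_def by (cases s0; cases "beta i") auto
        moreover have "\<exists>k. 0 \<le> k \<and> k < hi j \<and> \<not> k \<ge> 2 \<and> k + 1 \<ge> 2"
          using hi2 by (intro exI[of _ 1]) simp
        ultimately show ?thesis unfolding L by auto
      next
        case o1: False
        then have o1': "out_degree E j = 1" using od_ge1[OF s0] by simp
        then have hj: "hi j = 1" unfolding hi_def by simp
        have cj: "c j = 1" using o1' unfolding c_def by simp
        have L: "lit i j y \<longleftrightarrow> y = 1 - d j" for y using True nb o1 unfolding lit_def by simp
        have bi: "beta i = ((d j = 1) \<noteq> negonly j i)"
          using br True o1' cj unfolding d_def by auto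
        show ?thesis
        proof (cases "d j = 1")
          case d1: True
          have "(j, i, beta i) \<in> E \<and> (j, i, \<not> beta i) \<notin> E"
            using bi d1 nb s0 unfolding negonly_def both_def by (cases s0; cases "beta i") auto
          then show ?thesis unfolding L d1 hj by auto
        next
          case d0: False
          have "(j, i, \<not> beta i) \<in> E \<and> (j, i, beta i) \<notin> E"
            using bi d0 nb s0 unfolding negonly_def both_def by (cases s0; cases "beta i") auto
          moreover have "d j = 0" using d0 cj unfolding d_def by (auto split: if_splits)
          ultimately show ?thesis unfolding L hj by auto
        qed
      qed
    qed
  next
    case False
    show ?thesis
    proof (cases "both j i")
      case b: True
      then have E2: "(j, i, True) \<in> E" "(j, i, False) \<in> E" unfolding both_def by auto
      have E3: "(j, i, \<not> beta i) \<in> E" "(j, i, beta i) \<in> E" using E2 by (cases "beta i"; simp)+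
      have L: "lit i j y \<longleftrightarrow> y = 1" for y using False b unfolding lit_def by simp
      have "hi j \<ge> 2" using hi_both[OF b] by simp
      then show ?thesis unfolding L using E3
        by (intro conjI iffI; (rule exI[of _ 0] | rule exI[of _ 1] | simp); simp)
    next
      case nb: False
      show ?thesis
      proof (cases "(j, i, \<not> beta i) \<in> E")
        case e: True
        have L: "lit i j y \<longleftrightarrow> y \<ge> 1" for y using False nb e unfolding lit_def by simp
        have "(j, i, beta i) \<notin> E" using single_sign[OF nb e] by auto
        then show ?thesis unfolding L using e h1 by auto
      next
        case e: False
        have L: "lit i j y \<longleftrightarrow> y \<le> 0" for y using False nb e unfolding lit_def by simp
        have "(j, i, beta i) \<in> E" using e s0 by (cases s0; cases "beta i") auto
        then show ?thesis unfolding L using e h1 by auto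
      qed
    qed
  qed
  then show "(\<exists>k. 0 \<le> k \<and> k < hi j \<and> \<not> lit i j k \<and> lit i j (k+1)) \<longleftrightarrow> (j, i, \<not> beta i) \<in> E"
    and "(\<exists>k. 0 \<le> k \<and> k < hi j \<and> lit i j k \<and> \<not> lit i j (k+1)) \<longleftrightarrow> (j, i, beta i) \<in> E" by auto
qed

abbreviation XX where "XX \<equiv> state_space n (\<lambda>_. 0) hi"

lemma hi_nonneg: "hi v \<ge> 0" unfolding hi_def by auto

lemma c_le_hi: "in_degree E i \<noteq> 0 \<Longrightarrow> c i \<le> hi i"
  unfolding c_def hi_def by auto

lemma ff_FDS: "is_FDS n (\<lambda>_. 0) hi ff"
  unfolding is_FDS_def state_space_def
  using hi_nonneg c_le_hi c_cases by (auto simp: ff_def) (smt (verit))+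

lemma Gin_lt: "j \<in> Gin i \<Longrightarrow> j < n" unfolding Gin_def using arcD by blast

lemma F_upd_in: "j \<in> Gin i \<Longrightarrow> F (x(j := v)) i = (beta i \<noteq> (lit i j v \<and> (\<forall>l\<in>Gin i - {j}. lit i l (x l))))"
  unfolding F_def by auto

lemma F_upd_out: "j \<notin> Gin i \<Longrightarrow> F (x(j := v)) i = F x i"
proof -
  assume "j \<notin> Gin i"
  then have "(\<forall>l\<in>Gin i. lit i l ((x(j := v)) l)) = (\<forall>l\<in>Gin i. lit i l (x l))" by auto
  then show ?thesis unfolding F_def by simp
qed

lemma lit_sat: assumes i: "i < n" "in_degree E i \<noteq> 0" and l: "l \<in> Gin i"
  shows "\<exists>y. 0 \<le> y \<and> y \<le> hi l \<and> lit i l y"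
proof -
  obtain s0 where s0: "(l, i, s0) \<in> E" using l unfolding Gin_def by blast
  show ?thesis
  proof (cases "s0 = beta i")
    case True
    then obtain k where "0 \<le> k \<and> k < hi l \<and> lit i l k \<and> \<not> lit i l (k+1)"
      using lit_updown(2)[OF i l] s0 by auto
    then show ?thesis by (intro exI[of _ k]) auto
  next
    case False
    then have "s0 = (\<not> beta i)" by auto
    then obtain k where "0 \<le> k \<and> k < hi l \<and> \<not> lit i l k \<and> lit i l (k+1)"
      using lit_updown(1)[OF i l] s0 by auto
    then show ?thesis by (intro exI[of _ "k+1"]) auto
  qed
qed

lemma witness: assumes i: "i < n" "in_degree E i \<noteq> 0" and j: "j \<in> Gin i" and k: "0 \<le> k" "k \<le> hi j"
  shows "\<exists>x\<in>XX. x j = k \<and> (\<forall>l\<in>Gin i - {j}. lit i l (x l))"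
proof -
  define w where "w l = (SOME y. 0 \<le> y \<and> y \<le> hi l \<and> lit i l y)" for l
  have w: "0 \<le> w l \<and> w l \<le> hi l \<and> lit i l (w l)" if "l \<in> Gin i" for l
    unfolding w_def using someI_ex[OF lit_sat[OF i that]] .
  define x where "x l = (if l = j then k else if l \<in> Gin i then w l else 0)" for l
  have jn: "j < n" using Gin_lt[OF j] .
  have "x \<in> XX" unfolding state_space_def
    using w k hi_nonneg jn Gin_lt[of _ i] unfolding x_def by force
  moreover have "x j = k" unfolding x_def by simp
  moreover have "\<forall>l\<in>Gin i - {j}. lit i l (x l)" using w unfolding x_def by auto
  ultimately show ?thesis by blast
qed

lemma ff_nonsrc: "i < n \<Longrightarrow> in_degree E i \<noteq> 0 \<Longrightarrow> ff x i = (if F x i then c i else 0)"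
  unfolding ff_def by simp

lemma c_pos: "c i > 0" using c_cases[of i] by auto

lemma IG_eq: "interaction_graph n (\<lambda>_. 0) hi ff = E"
proof (intro set_eqI iffI)
  fix e assume "e \<in> interaction_graph n (\<lambda>_. 0) hi ff"
  then obtain j i s x where e: "e = (j, i, s)" and jn: "j < n" and "i < n" and x: "x \<in> XX" "x j < hi j"
    and ch: "if s then ff (x(j := x j + 1)) i - ff x i > 0 else ff (x(j := x j + 1)) i - ff x i < 0"
    unfolding interaction_graph_def by auto
  note i = \<open>i < n\<close>
  have x0: "0 \<le> x j" using x jn unfolding state_space_def by auto
  have nsrc: "in_degree E i \<noteq> 0"
  proof
    assume "in_degree E i = 0"
    then show False using ch unfolding ff_def by (auto split: if_splits)
  qed
  have jG: "j \<in> Gin i"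
  proof (rule ccontr)
    assume "j \<notin> Gin i"
    then have "F (x(j := x j + 1)) i = F x i" by (rule F_upd_out)
    then show False using ch ff_nonsrc[OF i nsrc] by (auto split: if_splits)
  qed
  define R where "R = (\<forall>l\<in>Gin i - {j}. lit i l (x l))"
  have Fx: "F x i = (beta i \<noteq> (lit i j (x j) \<and> R))"
    using F_upd_in[OF jG, of x "x j"] unfolding R_def by simp
  have Fx': "F (x(j := x j + 1)) i = (beta i \<noteq> (lit i j (x j + 1) \<and> R))"
    using F_upd_in[OF jG, of x "x j + 1"] unfolding R_def by simp
  note ud = lit_updown[OF i nsrc jG]
  show "e \<in> E"
  proof (cases s)
    case True
    then have "F (x(j := x j + 1)) i \<and> \<not> F x i"
      using ch ff_nonsrc[OF i nsrc] c_pos[of i] by (auto split: if_splits)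
    then have "R \<and> (if beta i then lit i j (x j) \<and> \<not> lit i j (x j + 1) else \<not> lit i j (x j) \<and> lit i j (x j + 1))"
      unfolding Fx Fx' by (cases "beta i") auto
    then show ?thesis using ud x0 x(2) e True by (cases "beta i") auto
  next
    case False
    then have "\<not> F (x(j := x j + 1)) i \<and> F x i"
      using ch ff_nonsrc[OF i nsrc] c_pos[of i] by (auto split: if_splits)
    then have "R \<and> (if beta i then \<not> lit i j (x j) \<and> lit i j (x j + 1) else lit i j (x j) \<and> \<not> lit i j (x j + 1))"
      unfolding Fx Fx' by (cases "beta i") auto
    then show ?thesis using ud x0 x(2) e False by (cases "beta i") auto
  qed
next
  fix e assume "e \<in> E"
  then obtain j i s where e: "e = (j, i, s)" and a: "(j, i, s) \<in> E" by (cases e) auto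
  have jn: "j < n" and i: "i < n" using arcD[OF a] by auto
  have nsrc: "in_degree E i \<noteq> 0" using a src_iff by blast
  have jG: "j \<in> Gin i" using a unfolding Gin_def by blast
  note ud = lit_updown[OF i nsrc jG]
  obtain k where k: "0 \<le> k" "k < hi j"
    and kk: "(s = (\<not> beta i) \<and> \<not> lit i j k \<and> lit i j (k+1)) \<or> (s = beta i \<and> lit i j k \<and> \<not> lit i j (k+1))"
  proof (cases "s = beta i")
    case True
    then show ?thesis using that ud(2) a by blast
  next
    case False
    then have "s = (\<not> beta i)" by auto
    then show ?thesis using that ud(1) a by blast
  qed
  obtain x where x: "x \<in> XX" "x j = k" and R: "\<forall>l\<in>Gin i - {j}. lit i l (x l)"
    using witness[OF i nsrc jG k(1)] k(2) by auto
  have "F x i = (beta i \<noteq> lit i j (x j))"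
    using F_upd_in[OF jG, of x "x j"] R by simp
  then have Fx: "F x i = (beta i \<noteq> lit i j k)" using x(2) by simp
  have Fx': "F (x(j := x j + 1)) i = (beta i \<noteq> lit i j (k+1))"
    using F_upd_in[OF jG, of x "x j + 1"] R x(2) by simp
  have "if s then ff (x(j := x j + 1)) i - ff x i > 0 else ff (x(j := x j + 1)) i - ff x i < 0"
    using kk Fx Fx' ff_nonsrc[OF i nsrc] c_pos[of i] by (cases s; cases "beta i") auto
  then show "e \<in> interaction_graph n (\<lambda>_. 0) hi ff"
    unfolding interaction_graph_def e using jn i x k by auto
qed

definition quiet where "quiet v y = (if out_degree E v \<ge> 2 then y = 0 \<or> y = c v else y = d v)"

lemma selfq: "in_degree E v = 0 \<or> out_degree E v \<ge> 2 \<Longrightarrow> quiet v (ff x v)"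
  unfolding quiet_def ff_def d_def by auto

lemma gate: assumes v: "v < n" "in_degree E v \<noteq> 0" and q: "quiet (p v) (y (p v))"
  shows "ff y v = d v"
proof -
  obtain s where s: "(p v, v, s) \<in> E" using p_arc v by blast
  have pG: "p v \<in> Gin v" using s unfolding Gin_def by blast
  have nl: "\<not> lit v (p v) (y (p v))"
  proof (cases "both (p v) v")
    case True
    then have "out_degree E (p v) \<ge> 2" by (rule both_od)
    then show ?thesis using q True c_cases[of "p v"] unfolding quiet_def lit_def by auto
  next
    case nb: False
    show ?thesis
    proof (cases "out_degree E (p v) \<ge> 2")
      case True
      have "c (p v) \<noteq> 2" using c_two[OF _ s] nb by blast
      then have "c (p v) = 1" using c_cases by blast
      then show ?thesis using q True nb unfolding quiet_def lit_def by auto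
    next
      case False
      then have "y (p v) = d (p v)" using q unfolding quiet_def by simp
      moreover have "lit v (p v) z = (z = 1 - d (p v))" for z using nb False unfolding lit_def by simp
      moreover have "d (p v) \<noteq> 1 - d (p v)" by presburger
      ultimately show ?thesis by simp
    qed
  qed
  then have "F y v = beta v" unfolding F_def using pG by blast
  then show ?thesis using ff_nonsrc[OF v] v unfolding d_def by simp
qed

lemma quiet_time: "v < n \<Longrightarrow> dist v < t \<Longrightarrow> quiet v ((ff ^^ t) x v)"
proof (induction "dist v" arbitrary: v t rule: less_induct)
  case less
  obtain t' where t: "t = Suc t'" using less.prems(2) by (cases t) auto
  show ?case
  proof (cases "in_degree E v = 0 \<or> out_degree E v \<ge> 2")
    case True
    then show ?thesis unfolding t using selfq by simp
  next
    case False
    then have nsrc: "in_degree E v \<noteq> 0" and o1: "out_degree E v \<le> 1" by auto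
    have dl: "dist (p v) < dist v" using p_dist[OF less.prems(1) nsrc o1] .
    have pv: "p v < n" using p_lt less.prems(1) nsrc by blast
    have "quiet (p v) ((ff ^^ t') x (p v))"
      using less.hyps[OF dl pv] dl less.prems(2) t by simp
    then have "ff ((ff ^^ t') x) v = d v" using gate[OF less.prems(1) nsrc] by blast
    then show ?thesis unfolding t quiet_def using False by simp
  qed
qed

lemma nilp: "(ff ^^ (n + 1)) x = (\<lambda>v. if v < n then d v else 0)"
proof
  fix v
  have "(ff ^^ (n + 1)) x v = ff ((ff ^^ n) x) v" by simp
  also have "\<dots> = (if v < n then d v else 0)"
  proof (cases "v < n \<and> in_degree E v \<noteq> 0")
    case True
    have pv: "p v < n" using p_lt True by blast
    have "quiet (p v) ((ff ^^ n) x (p v))" using quiet_time[OF pv] dist_lt[OF pv] by blast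
    then show ?thesis using gate True by simp
  next
    case False
    then show ?thesis unfolding ff_def d_def by auto
  qed
  finally show "(ff ^^ (n + 1)) x v = (if v < n then d v else 0)" .
qed

lemma deg_bounded: "degree_bounded n (\<lambda>_. 0) hi ff"
  unfolding degree_bounded_def IG_eq Let_def
  by (auto simp: hi_def)

lemma cons_main: "\<exists>lo hi f. is_FDS n lo hi f \<and> interaction_graph n lo hi f = E \<and>
           degree_bounded n lo hi f \<and>
           (\<exists>c. \<forall>x \<in> state_space n lo hi. (f ^^ (n + 1)) x = c)"
  using ff_FDS IG_eq deg_bounded nilp by blast

end

theorem theorem3:
  fixes n :: nat and E :: "(nat \<times> nat \<times> bool) set"
  assumes "signed_digraph n E"
    and "connected_sd n E"
    and "\<not> signed_cycle n E"
  shows "\<exists>lo hi f. is_FDS n lo hi f \<and> interaction_graph n lo hi f = E \<and>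
           degree_bounded n lo hi f \<and>
           (\<exists>c. \<forall>x \<in> state_space n lo hi. (f ^^ (n + 1)) x = c)"
proof -
  interpret g: gr n E by unfold_locales (rule assms(1))
  obtain p dist where P: "\<forall>v. v < n \<longrightarrow> in_degree E v \<noteq> 0 \<longrightarrow> (\<exists>s. (p v, v, s) \<in> E)"
    "\<forall>v. v < n \<longrightarrow> in_degree E v \<noteq> 0 \<longrightarrow> out_degree E v \<le> 1 \<longrightarrow> dist (p v) < dist v"
    "\<forall>v. v < n \<longrightarrow> dist v < n"
    using g.exists_pd[OF assms(2) assms(3)] by blast
  interpret c: cons n E p dist by unfold_locales (use assms(1) P in auto)
  show ?thesis by (rule c.cons_main)
qed

end
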